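(* Let $N\ge 1$, data $x_1,\dots,x_N\in\mathbb{R}$, and parameters $\sigma_\theta,\sigma_x>0$. Consider the one-dimensional Gaussian posterior with prior $\mathcal{N}(0,\sigma_\theta^2)$ and elementary likelihood $x_i|\theta\sim\mathcal{N}(\theta,\sigma_x^2)$, whose posterior mean is $\mu_{\rm post}=\big(\sigma_x^2/\sigma_\theta^2+N\big)^{-1}\sum_{i=1}^N x_i$. For $n\in\{1,\dots,N\}$ and a random index set $I_n$ of size $n$ drawn uniformly from $\{1,\dots,N\}$ (with or without replacement), define the stochastic gradient $\widehat F_n(\theta)=-\theta/\sigma_\theta^2+\frac{N}{n}\sum_{i\in I_n}(x_i-\theta)/\sigma_x^2$. Fix a friction $\gamma>0$, a time step $\Delta t>0$, let $\alpha_t=e^{-\gamma t}$, and consider the scheme $$\begin{aligned}p^{m+1/3}&=\alpha_{\Delta t/2}p^m+(1-\alpha_{\Delta t})^{1/2}G^m,\\ \theta^{m+1/2}&=\theta^m+\tfrac{\Delta t}{2}p^{m+1/3},\\ p^{m+2/3}&=p^{m+1/3}+\Delta t\,\widehat F_n^{(m)}(\theta^{m+1/2}),\\ \theta^{m+1}&=\theta^{m+1/2}+\tfrac{\Delta t}{2}p^{m+2/3},\\ p^{m+1}&=\alpha_{\Delta t/2}p^{m+2/3}+(1-\alpha_{\Delta t})^{1/2}G^{m+1/2},\end{aligned}$$ where $(G^m)_{m\ge0}$, $(G^{m+1/2})_{m\ge0}$ are independent families of i.i.d. standard Gaussians, $\widehat F_n^{(m)}$ uses a fresh index set $I_n^m$,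 the sets $(I_n^m)_{m\ge0}$ are i.i.d. and independent of the Gaussians and of the initial condition $(\theta^0,p^0)$, which has finite first moments. Then there exists $\Delta t_\star>0$ such that for all $\Delta t\in(0,\Delta t_\star]$, $$\lim_{m\to\infty}\mathbb{E}[\theta^m]=\mu_{\rm post},\qquad\lim_{m\to\infty}\mathbb{E}[p^m]=0.$$
   Context: This is the Strang splitting discretization of (kinetic) Langevin dynamics $d\theta=p\,dt$, $dp=\nabla\log\pi(\theta)dt-\gamma p\,dt+\sqrt{2\gamma}\,dW$ in which the exact gradient is replaced by the mini-batch estimator $\widehat F_n$. The claim is that the mean of the sampled parameter is asymptotically unbiased despite mini-batching, for any batch size $n$ and sampling with or without replacement. *)

theory Defs
  imports "HOL-Probability.Probability"
begin

definition batch_with_repl :: "nat \<Rightarrow> nat \<Rightarrow> nat list pmf" where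
  "batch_with_repl N n = pmf_of_set {xs. length xs = n \<and> set xs \<subseteq> {1..N}}"

text \<open>Uniform over ordered lists of distinct indices; its set of entries is a uniform n-subset.\<close>
definition batch_without_repl :: "nat \<Rightarrow> nat \<Rightarrow> nat list pmf" where
  "batch_without_repl N n = pmf_of_set {xs. length xs = n \<and> distinct xs \<and> set xs \<subseteq> {1..N}}"

definition post_mean :: "nat \<Rightarrow> (nat \<Rightarrow> real) \<Rightarrow> real \<Rightarrow> real \<Rightarrow> real" where
  "post_mean N x s_th s_x = inverse (s_x^2 / s_th^2 + real N) * (\<Sum>i=1..N. x i)"

definition Fhat :: "nat \<Rightarrow> nat \<Rightarrow> (nat \<Rightarrow> real) \<Rightarrow> real \<Rightarrow> real \<Rightarrow> nat list \<Rightarrow> real \<Rightarrow> real" where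
  "Fhat N n x s_th s_x I th = - th / s_th^2 + real N / real n * (\<Sum>i\<leftarrow>I. (x i - th) / s_x^2)"

definition alpha :: "real \<Rightarrow> real \<Rightarrow> real" where
  "alpha gamma t = exp (- gamma * t)"

text \<open>One step of the splitting scheme, from (theta^m, p^m) using G^m, I^m, G^(m+1/2).\<close>
definition lstep :: "nat \<Rightarrow> nat \<Rightarrow> (nat \<Rightarrow> real) \<Rightarrow> real \<Rightarrow> real \<Rightarrow> real \<Rightarrow> real
    \<Rightarrow> real \<times> real \<Rightarrow> real \<Rightarrow> nat list \<Rightarrow> real \<Rightarrow> real \<times> real" where
  "lstep N n x s_th s_x gamma dt z g I h =
     (let p1 = alpha gamma (dt/2) * snd z + sqrt (1 - alpha gamma dt) * g;
          th2 = fst z + dt/2 * p1;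
          p2 = p1 + dt * Fhat N n x s_th s_x I th2;
          th' = th2 + dt/2 * p2;
          p' = alpha gamma (dt/2) * p2 + sqrt (1 - alpha gamma dt) * h
      in (th', p'))"

fun traj :: "nat \<Rightarrow> nat \<Rightarrow> (nat \<Rightarrow> real) \<Rightarrow> real \<Rightarrow> real \<Rightarrow> real \<Rightarrow> real
    \<Rightarrow> ('a \<Rightarrow> real) \<Rightarrow> ('a \<Rightarrow> real) \<Rightarrow> (nat \<Rightarrow> 'a \<Rightarrow> real) \<Rightarrow> (nat \<Rightarrow> 'a \<Rightarrow> nat list)
    \<Rightarrow> (nat \<Rightarrow> 'a \<Rightarrow> real) \<Rightarrow> nat \<Rightarrow> 'a \<Rightarrow> real \<times> real" where
  "traj N n x s_th s_x gamma dt th0 p0 G I H 0 \<omega> = (th0 \<omega>, p0 \<omega>)"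
| "traj N n x s_th s_x gamma dt th0 p0 G I H (Suc m) \<omega> =
     lstep N n x s_th s_x gamma dt (traj N n x s_th s_x gamma dt th0 p0 G I H m \<omega>)
       (G m \<omega>) (I m \<omega>) (H m \<omega>)"

text \<open>Sources of randomness: initial condition, G^m, G^(m+1/2), I^m.\<close>
datatype src = Init | Gm nat | Gh nat | Ix nat

definition gen_sets :: "'a measure \<Rightarrow> ('a \<Rightarrow> real) \<Rightarrow> ('a \<Rightarrow> real) \<Rightarrow> (nat \<Rightarrow> 'a \<Rightarrow> real)
    \<Rightarrow> (nat \<Rightarrow> 'a \<Rightarrow> nat list) \<Rightarrow> (nat \<Rightarrow> 'a \<Rightarrow> real) \<Rightarrow> src \<Rightarrow> 'a set set" where
  "gen_sets M th0 p0 G I H k = (case k of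
      Init \<Rightarrow> {(\<lambda>\<omega>. (th0 \<omega>, p0 \<omega>)) -` A \<inter> space M | A. A \<in> sets (borel :: (real \<times> real) measure)}
    | Gm m \<Rightarrow> {G m -` A \<inter> space M | A. A \<in> sets (borel :: real measure)}
    | Gh m \<Rightarrow> {H m -` A \<inter> space M | A. A \<in> sets (borel :: real measure)}
    | Ix m \<Rightarrow> {I m -` A \<inter> space M | A. A \<in> sets (count_space (UNIV :: nat list set))})"

end

theory Submission
  imports Defs
begin



lemma gauss_facts:
  assumes "distributed M lborel X std_normal_density"
  shows "integrable M X" "integral\<^sup>L M X = 0"
proof -
  show "integrable M X"
    using distributed_integrable_var[OF assms] integrable_std_normal_moment[of 1]
    by (simp add: normal_density_nonneg)
  have "(\<integral>x. std_normal_density x * x \<partial>lborel) = (\<integral>w. X w \<partial>M)"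
    using distributed_integral[OF assms, of "\<lambda>x. x"] by (simp add: normal_density_nonneg)
  moreover have "(\<integral>x. std_normal_density x * x \<partial>lborel) = 0"
    using integral_std_normal_moment_odd[of 0] by simp
  ultimately show "integral\<^sup>L M X = 0" by simp
qed

definition SS :: "(nat \<Rightarrow> real) \<Rightarrow> nat list \<Rightarrow> real" where
  "SS x L = sum_list (map x L)"

lemma Fhat_gen:
  "Fhat N n x s_th s_x I th = - th / s_th^2 + real N / real n * ((SS x I - real (length I) * th) / s_x^2)"
proof -
  have "(\<Sum>i\<leftarrow>I. (x i - th) / s_x^2) = (SS x I - real (length I) * th) / s_x^2"
    by (induction I) (auto simp: SS_def diff_divide_distrib add_divide_distrib algebra_simps)
  then show ?thesis by (simp add: Fhat_def)
qed

lemma Fhat_lin: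
  assumes "length I = n" "n \<ge> 1" "s_x \<noteq> 0"
  shows "Fhat N n x s_th s_x I th = - (1/s_th^2 + real N/s_x^2) * th + real N / (real n * s_x^2) * SS x I"
  unfolding Fhat_gen using assms by (simp add: field_simps)

lemma step_eq:
  fixes gamma dt s_th s_x a c0 K \<beta> :: real
  assumes "length I = n" "n \<ge> 1" "s_x \<noteq> 0"
   and "a = alpha gamma (dt/2)" and "c0 = sqrt (1 - alpha gamma dt)"
    and "K = 1/s_th^2 + real N/s_x^2" and "\<beta> = real N / (real n * s_x^2)"
  shows "fst (lstep N n x s_th s_x gamma dt z g I hh) =
           (1 - dt^2*K/2) * fst z + dt*a*(1 - dt^2*K/4) * snd z + dt*c0*(1 - dt^2*K/4) * g + dt^2*\<beta>/2 * SS x I"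
    and "snd (lstep N n x s_th s_x gamma dt z g I hh) =
           - a*dt*K * fst z + a^2*(1 - dt^2*K/2) * snd z + a*c0*(1 - dt^2*K/2) * g + a*dt*\<beta> * SS x I + c0 * hh"
  unfolding lstep_def Let_def Fhat_lin[OF assms(1-3)] assms(4-7)[symmetric]
  by (simp_all add: algebra_simps power2_eq_square)




lemma sq_tendsto_zero:
  fixes f :: "nat \<Rightarrow> real"
  assumes "(\<lambda>m. (f m)^2) \<longlonglongrightarrow> 0"
  shows "f \<longlonglongrightarrow> 0"
proof -
  have "(\<lambda>m. sqrt ((f m)^2)) \<longlonglongrightarrow> sqrt 0" by (intro tendsto_real_sqrt assms)
  then have "(\<lambda>m. \<bar>f m\<bar>) \<longlonglongrightarrow> 0" by simp
  then show ?thesis by (simp add: tendsto_rabs_zero_iff)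
qed

lemma det_conv:
  fixes u v :: "nat \<Rightarrow> real" and a K dt \<beta> Sb :: real
  assumes a0: "0 < a" and a1: "a < 1" and K0: "0 < K" and dt0: "0 < dt" and small: "dt^2 * K < 4"
    and ru: "\<And>m. u (Suc m) = (1 - dt^2*K/2) * u m + dt*a*(1 - dt^2*K/4) * v m + dt^2*\<beta>/2 * Sb"
    and rv: "\<And>m. v (Suc m) = - a*dt*K * u m + a^2*(1 - dt^2*K/2) * v m + a*dt*\<beta> * Sb"
  shows "u \<longlonglongrightarrow> \<beta> * Sb / K" "v \<longlonglongrightarrow> 0"
proof -
  define ts where "ts = \<beta> * Sb / K"
  have Kts: "K * ts = \<beta> * Sb" using K0 by (simp add: ts_def)
  define c where "c = 1 - dt^2*K/4"
  have c0: "c > 0" using small by (simp add: c_def)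
  define e where "e m = u m - ts" for m
  define w where "w m = - dt * K * e m + a * (1 - dt^2*K/2) * v m" for m
  have b1: "dt^2*\<beta>/2*Sb = dt^2/2*(K*ts)" using Kts by (simp add: algebra_simps)
  have b2: "a*dt*\<beta>*Sb = a*dt*(K*ts)" using Kts by (simp add: algebra_simps)
  have re: "e (Suc m) = (1 - dt^2*K/2) * e m + dt*a*c * v m" for m
    unfolding e_def ru c_def b1 by (simp add: field_simps power2_eq_square)
  have rv': "v (Suc m) = a * w m" for m
    unfolding w_def e_def rv b2 by (simp add: field_simps power2_eq_square)
  define Q where "Q m = K * (e m)^2 + c * (v m)^2" for m
  have Qid: "Q m - Q (Suc m) = c * (1 - a^2) * ((v m)^2 + (w m)^2)" for m
    unfolding Q_def re rv' w_def c_def by algebra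
  have Qnn: "Q m \<ge> 0" for m unfolding Q_def using K0 c0 by (intro add_nonneg_nonneg mult_nonneg_nonneg) auto
  have aa: "a*a < 1*1" by (rule mult_strict_mono) (use a0 a1 in auto)
  have ca: "c * (1 - a^2) > 0" using c0 aa by (simp add: power2_eq_square)
  have Qdec: "Q (Suc m) \<le> Q m" for m
  proof -
    have "c * (1 - a^2) * ((v m)^2 + (w m)^2) \<ge> 0" by (rule mult_nonneg_nonneg) (use ca in auto)
    then show ?thesis using Qid[of m] by linarith
  qed
  then have dec: "decseq Q" by (simp add: decseq_SucI)
  obtain L where QL: "Q \<longlonglongrightarrow> L"
    using decseq_convergent[OF dec, of 0] Qnn by blast
  from QL have "(\<lambda>m. Q (Suc m)) \<longlonglongrightarrow> L" by (rule LIMSEQ_Suc)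
  from tendsto_diff[OF QL this] have D0: "(\<lambda>m. Q m - Q (Suc m)) \<longlonglongrightarrow> 0" by simp
  have D1: "(\<lambda>m. (Q m - Q (Suc m)) / (c * (1 - a^2))) \<longlonglongrightarrow> 0"
    using tendsto_divide_zero[OF D0] by simp
  have Dq: "(Q m - Q (Suc m)) / (c * (1 - a^2)) = (v m)^2 + (w m)^2" for m
    unfolding Qid using ca by (metis less_numeral_extra(3) nonzero_mult_div_cancel_left)
  have v2: "(\<lambda>m. (v m)^2) \<longlonglongrightarrow> 0"
  proof (rule tendsto_sandwich[OF _ _ tendsto_const D1])
    show "\<forall>\<^sub>F m in sequentially. 0 \<le> (v m)^2" by simp
    show "\<forall>\<^sub>F m in sequentially. (v m)^2 \<le> (Q m - Q (Suc m)) / (c * (1 - a^2))"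
      unfolding Dq by simp
  qed
  have w2: "(\<lambda>m. (w m)^2) \<longlonglongrightarrow> 0"
  proof (rule tendsto_sandwich[OF _ _ tendsto_const D1])
    show "\<forall>\<^sub>F m in sequentially. 0 \<le> (w m)^2" by simp
    show "\<forall>\<^sub>F m in sequentially. (w m)^2 \<le> (Q m - Q (Suc m)) / (c * (1 - a^2))"
      unfolding Dq by simp
  qed
  have vt: "v \<longlonglongrightarrow> 0" using sq_tendsto_zero[OF v2] .
  have wt: "w \<longlonglongrightarrow> 0" using sq_tendsto_zero[OF w2] .
  have eeq: "e m = (a * (1 - dt^2*K/2) * v m - w m) / (dt * K)" for m
    unfolding w_def using dt0 K0 by (simp add: field_simps)
  have "(\<lambda>m. (a * (1 - dt^2*K/2) * v m - w m) / (dt * K)) \<longlonglongrightarrow> (a * (1 - dt^2*K/2) * 0 - 0) / (dt * K)"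
    by (intro tendsto_divide tendsto_diff tendsto_mult tendsto_const vt wt) (use dt0 K0 in simp)
  moreover have "e = (\<lambda>m. (a * (1 - dt^2*K/2) * v m - w m) / (dt * K))"
    by (rule ext) (rule eeq)
  ultimately have "e \<longlonglongrightarrow> 0" by simp
  then have "(\<lambda>m. e m + ts) \<longlonglongrightarrow> 0 + ts" by (intro tendsto_intros)
  then show "u \<longlonglongrightarrow> \<beta> * Sb / K" by (simp add: e_def ts_def)
  show "v \<longlonglongrightarrow> 0" by (rule vt)
qed




definition tr :: "nat \<Rightarrow> nat \<Rightarrow> nat" where
  "tr k i = (if i = 1 then k else if i = k then 1 else i)"

lemma tr_tr[simp]: "tr k (tr k i) = i" by (simp add: tr_def)
lemma tr_in: "k \<in> {1..N} \<Longrightarrow> i \<in> {1..N} \<Longrightarrow> tr k i \<in> {1..N}" by (auto simp: tr_def)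
lemma tr_eq1: "tr k i = 1 \<longleftrightarrow> i = k" by (auto simp: tr_def)
lemma inj_tr: "inj (tr k)" by (metis injI tr_tr)

lemma count_map_tr: "count_list (map (tr k) xs) 1 = count_list xs k"
  by (induction xs) (auto simp: tr_def)

lemma sum_list_count:
  fixes f :: "nat \<Rightarrow> real"
  assumes "set xs \<subseteq> {1..N}"
  shows "sum_list (map f xs) = (\<Sum>k\<in>{1..N}. real (count_list xs k) * f k)"
  using assms
proof (induction xs)
  case Nil then show ?case by simp
next
  case (Cons a xs)
  have a: "a \<in> {1..N}" using Cons.prems by auto
  have "(\<Sum>k\<in>{1..N}. real (count_list (a#xs) k) * f k)
      = (\<Sum>k\<in>{1..N}. real (count_list xs k) * f k + (if a = k then f k else 0))"
    by (rule sum.cong) (auto simp: algebra_simps)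
  also have "\<dots> = (\<Sum>k\<in>{1..N}. real (count_list xs k) * f k) + f a"
    using a by (simp add: sum.distrib)
  finally show ?case using Cons by simp
qed

lemma batch_sum_gen:
  fixes S :: "nat list set" and x :: "nat \<Rightarrow> real"
  assumes fin: "finite S" and N1: "1 \<le> N"
    and props: "\<And>xs. xs \<in> S \<Longrightarrow> length xs = n \<and> set xs \<subseteq> {1..N}"
    and closed: "\<And>k xs. k \<in> {1..N} \<Longrightarrow> xs \<in> S \<Longrightarrow> map (tr k) xs \<in> S"
  shows "(\<Sum>xs\<in>S. sum_list (map x xs)) = real (card S) * real n / real N * (\<Sum>i=1..N. x i)"
proof -
  define C where "C k = (\<Sum>xs\<in>S. real (count_list xs k))" for k
  have Ck: "C k = C 1" if k: "k \<in> {1..N}" for k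
  proof -
    have bij: "bij_betw (map (tr k)) S S"
      by (rule bij_betw_byWitness[where f'="map (tr k)"]) (use closed k in \<open>auto simp: comp_def\<close>)
    have "C 1 = (\<Sum>xs\<in>S. real (count_list (map (tr k) xs) 1))"
      unfolding C_def using sum.reindex_bij_betw[OF bij, of "\<lambda>ys. real (count_list ys 1)"] by simp
    also have "\<dots> = C k" unfolding C_def count_map_tr ..
    finally show ?thesis by simp
  qed
  have "(\<Sum>k\<in>{1..N}. C k) = (\<Sum>xs\<in>S. real (\<Sum>k\<in>{1..N}. count_list xs k))"
    unfolding C_def by (subst sum.swap) simp
  also have "\<dots> = (\<Sum>xs\<in>S. real n)"
    by (rule sum.cong) (use props in \<open>auto simp: sum_count_set\<close>)
  moreover have "(\<Sum>k\<in>{1..N}. C k) = (\<Sum>k\<in>{1..N}. C 1)"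
    by (rule sum.cong[OF refl]) (rule Ck)
  ultimately have "real N * C 1 = real (card S) * real n"
    by simp
  then have C1: "C 1 = real (card S) * real n / real N" using N1 by (simp add: field_simps)
  have "(\<Sum>xs\<in>S. sum_list (map x xs)) = (\<Sum>xs\<in>S. \<Sum>k\<in>{1..N}. real (count_list xs k) * x k)"
    by (rule sum.cong[OF refl], rule sum_list_count) (use props in blast)
  also have "\<dots> = (\<Sum>k\<in>{1..N}. C k * x k)"
    unfolding C_def by (subst sum.swap) (simp add: sum_distrib_right)
  also have "\<dots> = (\<Sum>k\<in>{1..N}. C 1 * x k)"
    by (rule sum.cong[OF refl]) (metis Ck)
  also have "\<dots> = real (card S) * real n / real N * (\<Sum>i=1..N. x i)"
    unfolding C1 by (simp add: sum_distrib_left)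
  finally show ?thesis .
qed

lemma tr_set: "k \<in> {1..N} \<Longrightarrow> set xs \<subseteq> {1..N} \<Longrightarrow> set (map (tr k) xs) \<subseteq> {1..N}"
  using tr_in[of k N] by auto

lemma batch_props:
  assumes "1 \<le> n" "n \<le> N" "D = batch_with_repl N n \<or> D = batch_without_repl N n"
  obtains S where "D = pmf_of_set S" "finite S" "S \<noteq> {}"
    "\<And>xs. xs \<in> S \<Longrightarrow> length xs = n \<and> set xs \<subseteq> {1..N}"
    "\<And>k xs. k \<in> {1..N} \<Longrightarrow> xs \<in> S \<Longrightarrow> map (tr k) xs \<in> S"
proof -
  define A where "A = {xs. length xs = n \<and> set xs \<subseteq> {1..N}}"
  define B where "B = {xs. length xs = n \<and> distinct xs \<and> set xs \<subseteq> {1..N}}"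
  have finA: "finite A"
    using finite_lists_length_eq[of "{1..N}" n] unfolding A_def by (simp add: conj_commute)
  have BA: "B \<subseteq> A" unfolding A_def B_def by auto
  have exB: "[1..<n+1] \<in> B"
    using assms unfolding B_def by auto
  show ?thesis using assms(3)
  proof
    assume d: "D = batch_with_repl N n"
    show ?thesis
    proof (rule that[of A])
      show "D = pmf_of_set A" using d by (simp add: batch_with_repl_def A_def)
      show "map (tr k) xs \<in> A" if "k \<in> {1..N}" "xs \<in> A" for k xs
        using that unfolding A_def by (auto simp: tr_def subset_iff)
      show "A \<noteq> {}" using exB BA by blast
    qed (use finA in \<open>auto simp: A_def\<close>)
  next
    assume d: "D = batch_without_repl N n"
    show ?thesis
    proof (rule that[of B])
      show "D = pmf_of_set B" using d by (simp add: batch_without_repl_def B_def)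
      show "map (tr k) xs \<in> B" if "k \<in> {1..N}" "xs \<in> B" for k xs
        using that inj_tr[of k] unfolding B_def by (auto simp: tr_def subset_iff distinct_map intro: inj_on_subset)
      show "B \<noteq> {}" using exB by blast
      show "finite B" using finite_subset[OF BA finA] .
    qed (auto simp: B_def)
  qed
qed




lemma mean_rec:
  fixes M :: "'a measure" and dt gamma s_th s_x a c0 K \<beta> Sb :: real
  assumes P: "prob_space M" and n1: "1 \<le> n" and sx: "s_x \<noteq> 0"
    and th0: "integrable M th0" and p0: "integrable M p0"
    and Gi: "\<And>m. integrable M (G m)" and G0: "\<And>m. integral\<^sup>L M (G m) = 0"
    and Hi: "\<And>m. integrable M (H m)" and H0: "\<And>m. integral\<^sup>L M (H m) = 0"
    and Im: "\<And>m. I m \<in> measurable M (count_space UNIV)"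
    and Si: "\<And>m. integrable M (\<lambda>\<omega>. SS x (I m \<omega>))" and S0: "\<And>m. integral\<^sup>L M (\<lambda>\<omega>. SS x (I m \<omega>)) = Sb"
    and AEl: "AE \<omega> in M. \<forall>m. length (I m \<omega>) = n"
    and ad: "a = alpha gamma (dt/2)" and cd: "c0 = sqrt (1 - alpha gamma dt)"
    and Kd: "K = 1/s_th^2 + real N/s_x^2" and bd: "\<beta> = real N / (real n * s_x^2)"
  defines "u \<equiv> \<lambda>m. integral\<^sup>L M (\<lambda>\<omega>. fst (traj N n x s_th s_x gamma dt th0 p0 G I H m \<omega>))"
    and "v \<equiv> \<lambda>m. integral\<^sup>L M (\<lambda>\<omega>. snd (traj N n x s_th s_x gamma dt th0 p0 G I H m \<omega>))"
  shows "u (Suc m) = (1 - dt^2*K/2) * u m + dt*a*(1 - dt^2*K/4) * v m + dt^2*\<beta>/2 * Sb"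
    and "v (Suc m) = - a*dt*K * u m + a^2*(1 - dt^2*K/2) * v m + a*dt*\<beta> * Sb"
proof -
  let ?T = "traj N n x s_th s_x gamma dt th0 p0 G I H"
  have Gm[measurable]: "G m \<in> borel_measurable M" for m using Gi by auto
  have Hm[measurable]: "H m \<in> borel_measurable M" for m using Hi by auto
  have Sm[measurable]: "(\<lambda>\<omega>. SS x (I m \<omega>)) \<in> borel_measurable M" for m using Si by auto
  have Lm[measurable]: "(\<lambda>\<omega>. real (length (I m \<omega>))) \<in> borel_measurable M" for m
    by (rule measurable_compose[OF Im]) simp
  have meas: "(\<lambda>\<omega>. fst (?T m \<omega>)) \<in> borel_measurable M \<and> (\<lambda>\<omega>. snd (?T m \<omega>)) \<in> borel_measurable M" for m
  proof (induction m)
    case 0 then show ?case using th0 p0 by auto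
  next
    case (Suc m)
    then have [measurable]: "(\<lambda>\<omega>. fst (?T m \<omega>)) \<in> borel_measurable M" "(\<lambda>\<omega>. snd (?T m \<omega>)) \<in> borel_measurable M"
      by auto
    show ?case unfolding traj.simps lstep_def Let_def Fhat_gen fst_conv snd_conv by measurable
  qed
  define Rf where "Rf m \<omega> = (1 - dt^2*K/2) * fst (?T m \<omega>) + dt*a*(1 - dt^2*K/4) * snd (?T m \<omega>) + dt*c0*(1 - dt^2*K/4) * G m \<omega> + dt^2*\<beta>/2 * SS x (I m \<omega>)" for m \<omega>
  define Rs where "Rs m \<omega> = - a*dt*K * fst (?T m \<omega>) + a^2*(1 - dt^2*K/2) * snd (?T m \<omega>) + a*c0*(1 - dt^2*K/2) * G m \<omega> + a*dt*\<beta> * SS x (I m \<omega>) + c0 * H m \<omega>" for m \<omega>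
  have RM: "Rf m \<in> borel_measurable M \<and> Rs m \<in> borel_measurable M" for m
  proof -
    have [measurable]: "(\<lambda>\<omega>. fst (?T m \<omega>)) \<in> borel_measurable M" "(\<lambda>\<omega>. snd (?T m \<omega>)) \<in> borel_measurable M"
      using meas[of m] by auto
    show ?thesis unfolding Rf_def[abs_def] Rs_def[abs_def] by measurable
  qed
  have AEf: "AE \<omega> in M. fst (?T (Suc m) \<omega>) = Rf m \<omega>" for m
    using AEl unfolding Rf_def by eventually_elim (simp only: traj.simps, rule step_eq(1)[OF _ n1 sx ad cd Kd bd], simp)
  have AEs: "AE \<omega> in M. snd (?T (Suc m) \<omega>) = Rs m \<omega>" for m
    using AEl unfolding Rs_def by eventually_elim (simp only: traj.simps, rule step_eq(2)[OF _ n1 sx ad cd Kd bd], simp)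
  have AEf': "AE \<omega> in M. Rf m \<omega> = fst (?T (Suc m) \<omega>)" for m
    using AEf[of m] by eventually_elim simp
  have AEs': "AE \<omega> in M. Rs m \<omega> = snd (?T (Suc m) \<omega>)" for m
    using AEs[of m] by eventually_elim simp
  have int: "integrable M (\<lambda>\<omega>. fst (?T m \<omega>)) \<and> integrable M (\<lambda>\<omega>. snd (?T m \<omega>))" for m
  proof (induction m)
    case 0 then show ?case using th0 p0 by auto
  next
    case (Suc m)
    then have i1: "integrable M (\<lambda>\<omega>. fst (?T m \<omega>))" and i2: "integrable M (\<lambda>\<omega>. snd (?T m \<omega>))" by auto
    have g1: "integrable M (Rf m)" unfolding Rf_def using i1 i2 Gi[of m] Si[of m] by auto
    have g2: "integrable M (Rs m)" unfolding Rs_def using i1 i2 Gi[of m] Si[of m] Hi[of m] by auto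
    show ?case
      using integrable_cong_AE_imp[OF g1 _ AEf'] integrable_cong_AE_imp[OF g2 _ AEs'] meas by blast
  qed
  show "u (Suc m) = (1 - dt^2*K/2) * u m + dt*a*(1 - dt^2*K/4) * v m + dt^2*\<beta>/2 * Sb"
  proof -
    have "u (Suc m) = integral\<^sup>L M (\<lambda>\<omega>. (1 - dt^2*K/2) * fst (?T m \<omega>) + dt*a*(1 - dt^2*K/4) * snd (?T m \<omega>) + dt*c0*(1 - dt^2*K/4) * G m \<omega> + dt^2*\<beta>/2 * SS x (I m \<omega>))"
      unfolding u_def Rf_def[symmetric, abs_def] by (rule integral_cong_AE[OF _ _ AEf]) (use meas[of "Suc m"] RM[of m] in auto)
    also have "\<dots> = (1 - dt^2*K/2) * u m + dt*a*(1 - dt^2*K/4) * v m + dt*c0*(1 - dt^2*K/4) * integral\<^sup>L M (G m) + dt^2*\<beta>/2 * Sb"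
      using int[of m] Gi[of m] Si[of m] unfolding u_def v_def by (simp add: S0)
    finally show ?thesis using G0 by simp
  qed
  show "v (Suc m) = - a*dt*K * u m + a^2*(1 - dt^2*K/2) * v m + a*dt*\<beta> * Sb"
  proof -
    have "v (Suc m) = integral\<^sup>L M (\<lambda>\<omega>. - a*dt*K * fst (?T m \<omega>) + a^2*(1 - dt^2*K/2) * snd (?T m \<omega>) + a*c0*(1 - dt^2*K/2) * G m \<omega> + a*dt*\<beta> * SS x (I m \<omega>) + c0 * H m \<omega>)"
      unfolding v_def Rs_def[symmetric, abs_def] by (rule integral_cong_AE[OF _ _ AEs]) (use meas[of "Suc m"] RM[of m] in auto)
    also have "\<dots> = - a*dt*K * u m + a^2*(1 - dt^2*K/2) * v m + a*c0*(1 - dt^2*K/2) * integral\<^sup>L M (G m) + a*dt*\<beta> * Sb + c0 * integral\<^sup>L M (H m)"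
      using int[of m] Gi[of m] Si[of m] Hi[of m] unfolding u_def v_def by (simp add: S0)
    finally show ?thesis using G0 H0 by simp
  qed
qed




theorem mainTheorem3:
  fixes M :: "'a measure"
    and N n :: nat and x :: "nat \<Rightarrow> real"
    and s_th s_x gamma :: real
    and D :: "nat list pmf"
    and th0 p0 :: "'a \<Rightarrow> real"
    and G H :: "nat \<Rightarrow> 'a \<Rightarrow> real"
    and I :: "nat \<Rightarrow> 'a \<Rightarrow> nat list"
  assumes "prob_space M"
    and "1 \<le> N" and "1 \<le> n" and "n \<le> N"
    and "0 < s_th" and "0 < s_x" and "0 < gamma"
    and "D = batch_with_repl N n \<or> D = batch_without_repl N n"
    and "integrable M th0" and "integrable M p0"
    and "\<And>m. distributed M lborel (G m) std_normal_density"
    and "\<And>m. distributed M lborel (H m) std_normal_density"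
    and "\<And>m. I m \<in> measurable M (count_space UNIV)"
    and "\<And>m. distr M (count_space UNIV) (I m) = measure_pmf D"
    and "prob_space.indep_sets M (gen_sets M th0 p0 G I H) UNIV"
  shows "\<exists>dt_star>0. \<forall>dt. 0 < dt \<and> dt \<le> dt_star \<longrightarrow>
           (\<lambda>m. integral\<^sup>L M (\<lambda>\<omega>. fst (traj N n x s_th s_x gamma dt th0 p0 G I H m \<omega>)))
              \<longlonglongrightarrow> post_mean N x s_th s_x
         \<and> (\<lambda>m. integral\<^sup>L M (\<lambda>\<omega>. snd (traj N n x s_th s_x gamma dt th0 p0 G I H m \<omega>)))
              \<longlonglongrightarrow> 0"
proof -
  note P = assms(1) and N1 = assms(2) and n1 = assms(3) and nN = assms(4)
    and sth = assms(5) and sx = assms(6) and g0 = assms(7) and Dd = assms(8)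
    and th0 = assms(9) and p0 = assms(10) and Gd = assms(11) and Hd = assms(12)
    and Im = assms(13) and Idist = assms(14)
  interpret prob_space M by (rule P)
  obtain S where DS: "D = pmf_of_set S" and finS: "finite S" and neS: "S \<noteq> {}"
    and props: "\<And>xs. xs \<in> S \<Longrightarrow> length xs = n \<and> set xs \<subseteq> {1..N}"
    and closed: "\<And>k xs. k \<in> {1..N} \<Longrightarrow> xs \<in> S \<Longrightarrow> map (tr k) xs \<in> S"
    using batch_props[OF n1 nN Dd] by metis
  have setD: "set_pmf D = S" using DS neS finS by simp
  define Sb where "Sb = real n / real N * (\<Sum>i=1..N. x i)"
  have Si: "integrable M (\<lambda>\<omega>. SS x (I m \<omega>))" for m
  proof -
    have "integrable (measure_pmf D) (SS x)"
      by (rule integrable_measure_pmf_finite) (simp add: setD finS)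
    then show ?thesis
      using integrable_distr_eq[OF Im[of m], of "SS x"] Idist[of m] by simp
  qed
  have S0: "integral\<^sup>L M (\<lambda>\<omega>. SS x (I m \<omega>)) = Sb" for m
  proof -
    have "integral\<^sup>L M (\<lambda>\<omega>. SS x (I m \<omega>)) = integral\<^sup>L (measure_pmf D) (SS x)"
      using integral_distr[OF Im[of m], of "SS x"] Idist[of m] by simp
    also have "\<dots> = (\<Sum>xs\<in>S. SS x xs) / real (card S)"
      unfolding DS by (rule integral_pmf_of_set[OF neS finS])
    also have "\<dots> = Sb"
      using batch_sum_gen[OF finS N1 props closed, of x] neS finS
      by (simp add: SS_def Sb_def)
    finally show ?thesis .
  qed
  have AEl: "AE \<omega> in M. \<forall>m. length (I m \<omega>) = n"
  proof (rule AE_all_countable[THEN iffD2], rule allI)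
    fix m
    have "AE y in measure_pmf D. length y = n" using props by (simp add: AE_measure_pmf_iff setD)
    then have "AE y in distr M (count_space UNIV) (I m). length y = n" by (simp only: Idist[of m])
    then show "AE \<omega> in M. length (I m \<omega>) = n" using AE_distr_iff[OF Im[of m], of "\<lambda>y. length y = n"] by simp
  qed
  have Gi: "integrable M (G m)" and G0: "integral\<^sup>L M (G m) = 0" for m using gauss_facts[OF Gd[of m]] by auto
  have Hi: "integrable M (H m)" and H0: "integral\<^sup>L M (H m) = 0" for m using gauss_facts[OF Hd[of m]] by auto
  define K where "K = 1/s_th^2 + real N/s_x^2"
  define \<beta> where "\<beta> = real N / (real n * s_x^2)"
  have K0: "K > 0" unfolding K_def using sth sx by (intro add_pos_nonneg) auto
  have lim: "\<beta> * Sb / K = post_mean N x s_th s_x"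
    unfolding post_mean_def \<beta>_def Sb_def K_def using sth sx N1 n1
    by (simp add: field_simps)
  show ?thesis
  proof (intro exI[of _ "min 1 (1/K)"] conjI allI impI)
    show "0 < min 1 (1/K)" using K0 by simp
    fix dt :: real assume dt: "0 < dt \<and> dt \<le> min 1 (1/K)"
    define a where "a = alpha gamma (dt/2)"
    define c0 where "c0 = sqrt (1 - alpha gamma dt)"
    have a0: "0 < a" and a1: "a < 1" unfolding a_def alpha_def using dt g0 by auto
    have "dt * K \<le> 1" using dt K0 by (simp add: field_simps)
    then have "dt * (dt * K) \<le> 1 * 1" using dt K0 by (intro mult_mono) auto
    then have "dt^2 * K \<le> 1" by (simp add: power2_eq_square mult.assoc)
    then have small: "dt^2 * K < 4" by simp
    note R = mean_rec[where G=G and H=H and I=I and ?th0.0=th0 and ?p0.0=p0 and x=x and M=M and dt=dt and gamma=gamma and N=N and n=n and s_th=s_th and s_x=s_x and Sb=Sb, OF P n1 _ th0 p0 Gi G0 Hi H0 Im Si S0 AEl a_def c0_def K_def \<beta>_def]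
    have sx0: "s_x \<noteq> 0" using sx by simp
    have dt0: "0 < dt" using dt by simp
    note C = det_conv[where u="\<lambda>m. integral\<^sup>L M (\<lambda>\<omega>. fst (traj N n x s_th s_x gamma dt th0 p0 G I H m \<omega>))"
      and v="\<lambda>m. integral\<^sup>L M (\<lambda>\<omega>. snd (traj N n x s_th s_x gamma dt th0 p0 G I H m \<omega>))",
      OF a0 a1 K0 dt0 small R(1)[OF sx0] R(2)[OF sx0]]
    show "(\<lambda>m. integral\<^sup>L M (\<lambda>\<omega>. fst (traj N n x s_th s_x gamma dt th0 p0 G I H m \<omega>))) \<longlonglongrightarrow> post_mean N x s_th s_x"
      using C(1) dt lim by simp
    show "(\<lambda>m. integral\<^sup>L M (\<lambda>\<omega>. snd (traj N n x s_th s_x gamma dt th0 p0 G I H m \<omega>))) \<longlonglongrightarrow> 0"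
      using C(2) dt by simp
  qed
qed


end
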